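(* Let $b\ge2$ and $k\in\mathbb{N}$, and let $f\in\mathcal{M}^b$ be a multiset whose maximal element is at most $k$ and which is not the constant $0$ function. Then $d(f)\le d([k]_b)$, and the inequality is strict if $f\neq[k]_b$. Equivalently, in any base $b\ge3$, among all $k$-digit numbers $n$ (in base $b$), the number $d_b(n)$ of lunar divisors has a unique maximum at $n=(b^k-1)/(b-1)$, whose base-$b$ expansion is $11\ldots1$.
   Context: $\mathbb{N}=\{0,1,2,\ldots\}$, $[k]=\{0,1,\ldots,k\}$. For $b\ge1$, $\mathcal{M}^b$ is the set of finite multisets of natural numbers with multiplicities at most $b$, i.e. functions $f:\mathbb{N}\to\{0,1,\ldots,b\}$ with $f(j)=0$ for all large $j$. The set-array representation of $f$ is $(A_1,\ldots,A_b)$ where $A_i=\{a\in\mathbb{N}: f(a)\ge i\}$ (so $A_1\supseteq A_2\supseteq\cdots\supseteq A_b$). The sum of multisets is defined coordinatewise on set arrays: $(A_1,\ldots,A_b)+(B_1,\ldots,B_b)=(A_1+B_1,\ldots,A_b+B_b)$, where $S+T=\{s+t:s\in S,t\in T\}$ and $S+\emptyset=\emptyset$. A multiset $g\in\mathcal{M}^b$ is a divisor of $f$ if $f=g+h$ for some $h\in\mathcal{M}^b$; for $f$ not identically $0$, $d(f)$ is the number of divisors of $f$. $[k]_b\in\mathcal{M}^b$ is the multiset with set-array representation $([k],\emptyset,\ldots,\emptyset)$. Base-$b$ lunar product: for $x=\sum_ix_ib^i$, $y=\sum_jy_jb^j$ with digits in $\{0,\ldots,b-1\}$, $x\otimes y=\sum_n(\max_{i+j=n}\min(x_i,y_j))b^n$;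 $d_b(n)$ is the number of positive integers $m$ with $m\otimes q=n$ for some integer $q$. *)

theory Defs
  imports Main
begin

text \<open>Multisets of naturals with multiplicities at most b, as functions nat => nat
  with finite support.\<close>
definition Mb :: "nat \<Rightarrow> (nat \<Rightarrow> nat) set" where
  "Mb b = {f. (\<forall>j. f j \<le> b) \<and> finite {j. f j \<noteq> 0}}"

text \<open>Set-array representation: component i (for 1 <= i <= b) is A_i.\<close>
definition set_array :: "(nat \<Rightarrow> nat) \<Rightarrow> nat \<Rightarrow> nat set" where
  "set_array f i = {a. f a \<ge> i}"

definition sumset :: "nat set \<Rightarrow> nat set \<Rightarrow> nat set" where
  "sumset S T = {s + t | s t. s \<in> S \<and> t \<in> T}"

definition ms_divisor :: "nat \<Rightarrow> (nat \<Rightarrow> nat) \<Rightarrow> (nat \<Rightarrow> nat) \<Rightarrow> bool" where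
  "ms_divisor b g f \<longleftrightarrow> g \<in> Mb b \<and> (\<exists>h \<in> Mb b. \<forall>i \<in> {1..b}.
      set_array f i = sumset (set_array g i) (set_array h i))"

definition ms_d :: "nat \<Rightarrow> (nat \<Rightarrow> nat) \<Rightarrow> nat" where
  "ms_d b f = card {g. ms_divisor b g f}"

definition interval_ms :: "nat \<Rightarrow> nat \<Rightarrow> nat" where
  "interval_ms k = (\<lambda>j. if j \<le> k then 1 else 0)"

definition digit :: "nat \<Rightarrow> nat \<Rightarrow> nat \<Rightarrow> nat" where
  "digit b x i = x div b ^ i mod b"

text \<open>Digits at positions n > x + y of the product are 0, so summing up to x + y suffices.\<close>
definition lunar_mult :: "nat \<Rightarrow> nat \<Rightarrow> nat \<Rightarrow> nat" where
  "lunar_mult b x y = (\<Sum>n\<le>x + y.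
      Max ((\<lambda>i. min (digit b x i) (digit b y (n - i))) ` {..n}) * b ^ n)"

definition lunar_d :: "nat \<Rightarrow> nat \<Rightarrow> nat" where
  "lunar_d b n = card {m. m > 0 \<and> (\<exists>q. lunar_mult b m q = n)}"

end

theory Submission
  imports Defs
begin


lemma sumset_alt: "sumset S T = (\<lambda>(s,t). s + t) ` (S \<times> T)"
  unfolding sumset_def by auto

lemma sumset_finite: "finite S \<Longrightarrow> finite T \<Longrightarrow> finite (sumset S T)"
  by (simp add: sumset_alt)

lemma sumset_empty_iff: "sumset S T = {} \<longleftrightarrow> S = {} \<or> T = {}"
  unfolding sumset_def by auto

lemma sumset_Min:
  assumes "finite S" "S \<noteq> {}" "finite T" "T \<noteq> {}"
  shows "Min (sumset S T) = Min S + Min T"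
proof (rule Min_eqI)
  show "finite (sumset S T)" using assms sumset_finite by auto
  show "\<And>y. y \<in> sumset S T \<Longrightarrow> Min S + Min T \<le> y"
    using assms unfolding sumset_def by (auto intro!: add_mono)
  show "Min S + Min T \<in> sumset S T"
    using assms Min_in[of S] Min_in[of T] unfolding sumset_def by blast
qed

lemma sumset_Max:
  assumes "finite S" "S \<noteq> {}" "finite T" "T \<noteq> {}"
  shows "Max (sumset S T) = Max S + Max T"
proof (rule Max_eqI)
  show "finite (sumset S T)" using assms sumset_finite by auto
  show "\<And>y. y \<in> sumset S T \<Longrightarrow> y \<le> Max S + Max T"
    using assms unfolding sumset_def by (auto intro!: add_mono)
  show "Max S + Max T \<in> sumset S T"
    using assms Max_in[of S] Max_in[of T] unfolding sumset_def by blast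
qed

definition amin :: "(nat \<Rightarrow> nat) \<Rightarrow> nat" where "amin g = Min {y. g y \<noteq> 0}"
definition amax :: "(nat \<Rightarrow> nat) \<Rightarrow> nat" where "amax g = Max {y. g y \<noteq> 0}"

lemma key:
  fixes f g h :: "nat \<Rightarrow> nat"
  defines "F \<equiv> {x. f x \<noteq> 0}"
  assumes fin: "finite {x. g x \<noteq> 0}" "finite {x. h x \<noteq> 0}"
  and FS: "F = sumset {x. g x \<noteq> 0} {x. h x \<noteq> 0}"
  and ne: "F \<noteq> {}"
  shows "{x. g x \<noteq> 0} \<noteq> {}" "amin g \<le> Min F" "amax g - amin g + Min F \<le> Max F"
    "amin g \<le> amax g" "g (amax g) \<noteq> 0"
    "\<And>x. g x \<noteq> 0 \<Longrightarrow> amin g \<le> x \<and> x \<le> amax g"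
    "\<And>x. x \<le> amax g - amin g \<Longrightarrow> g (x + amin g) \<noteq> 0 \<Longrightarrow> x + Min F \<in> F"
    "\<And>x. x \<le> amax g - amin g \<Longrightarrow> x + Min F \<in> F \<Longrightarrow>
        \<exists>y\<le>x. x - y \<le> (Max F - Min F) - (amax g - amin g) \<and> g (y + amin g) \<noteq> 0"
proof -
  define S where "S = {x. g x \<noteq> 0}"
  define T where "T = {x. h x \<noteq> 0}"
  have SS: "S \<noteq> {}" "T \<noteq> {}" using ne FS sumset_empty_iff unfolding S_def T_def by auto
  show "{x. g x \<noteq> 0} \<noteq> {}" using SS(1) unfolding S_def by simp
  have fS: "finite S" "finite T" using fin unfolding S_def T_def by auto
  have mF: "Min F = Min S + Min T" using sumset_Min[OF fS(1) SS(1) fS(2) SS(2)] FS S_def T_def by simp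
  have MF: "Max F = Max S + Max T" using sumset_Max[OF fS(1) SS(1) fS(2) SS(2)] FS S_def T_def by simp
  have am: "amin g = Min S" "amax g = Max S" unfolding amin_def amax_def S_def by auto
  have mm: "Min T \<le> Max T" "Min S \<le> Max S" using fS SS by auto
  show "amin g \<le> Min F" using mF am by simp
  show "amax g - amin g + Min F \<le> Max F" using mF MF am mm by simp
  show "amin g \<le> amax g" using am mm by simp
  show "g (amax g) \<noteq> 0" using am fS SS Max_in[of S] unfolding S_def by auto
  show mb: "\<And>x. g x \<noteq> 0 \<Longrightarrow> amin g \<le> x \<and> x \<le> amax g"
    using am fS unfolding S_def by auto
  show "\<And>x. x \<le> amax g - amin g \<Longrightarrow> g (x + amin g) \<noteq> 0 \<Longrightarrow> x + Min F \<in> F"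
  proof -
    fix x assume "g (x + amin g) \<noteq> 0"
    then have "x + amin g \<in> S" unfolding S_def by simp
    moreover have "Min T \<in> T" using fS SS by simp
    ultimately have "(x + amin g) + Min T \<in> sumset S T" unfolding sumset_def by blast
    then show "x + Min F \<in> F" using FS mF am unfolding S_def T_def
      by (simp add: add.assoc)
  qed
  show "\<And>x. x \<le> amax g - amin g \<Longrightarrow> x + Min F \<in> F \<Longrightarrow>
        \<exists>y\<le>x. x - y \<le> (Max F - Min F) - (amax g - amin g) \<and> g (y + amin g) \<noteq> 0"
  proof -
    fix x assume x: "x \<le> amax g - amin g" "x + Min F \<in> F"
    then obtain p q where pq: "p \<in> S" "q \<in> T" "x + Min F = p + q"
      using FS unfolding sumset_def S_def T_def by auto
    have "Min T \<le> q" "q \<le> Max T" using pq fS by auto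
    moreover have "Min S \<le> p" "p \<le> Max S" using pq fS by auto
    moreover have "g (p - Min S + amin g) \<noteq> 0" using pq am \<open>Min S \<le> p\<close> unfolding S_def by simp
    ultimately show "\<exists>y\<le>x. x - y \<le> (Max F - Min F) - (amax g - amin g) \<and> g (y + amin g) \<noteq> 0"
      using pq mF MF am x mm
      by (intro exI[of _ "p - Min S"]) auto
  qed
qed

definition Phi :: "nat \<Rightarrow> nat \<Rightarrow> (nat \<Rightarrow> nat) \<Rightarrow> nat \<Rightarrow> nat" where
  "Phi m j g x = (if x \<le> amax g - amin g then
      (if g (x + amin g) \<noteq> 0 then g (x + amin g)
       else if (\<exists>y\<le>x. x - y \<le> j - (amax g - amin g) \<and> g (y + amin g) \<noteq> 0) then 0 else 1)
    else if x \<le> amax g - amin g + m then (if x = amax g then 2 else 1) else 0)"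

lemma Phi_props:
  fixes f g h :: "nat \<Rightarrow> nat"
  defines "F \<equiv> {x. f x \<noteq> 0}"
  defines "P \<equiv> Phi (Min F) (Max F - Min F) g"
  assumes fin: "finite {x. g x \<noteq> 0}" "finite {x. h x \<noteq> 0}"
  and FS: "F = sumset {x. g x \<noteq> 0} {x. h x \<noteq> 0}"
  and ne: "F \<noteq> {}"
  shows "P (amax g - amin g + Min F) \<noteq> 0"
    "\<And>x. amax g - amin g + Min F < x \<Longrightarrow> P x = 0"
    "1 \<le> amin g \<Longrightarrow> P (amax g) = 2"
    "\<And>x. amax g - amin g < x \<Longrightarrow> x \<le> amax g - amin g + Min F \<Longrightarrow> x \<noteq> amax g \<Longrightarrow> P x = 1"
    "\<And>x. x \<le> amax g - amin g \<Longrightarrow> (g (x + amin g) \<noteq> 0 \<longleftrightarrow> P x \<noteq> 0 \<and> x + Min F \<in> F)"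
    "\<And>x. x \<le> amax g - amin g \<Longrightarrow> g (x + amin g) \<noteq> 0 \<Longrightarrow> P x = g (x + amin g)"
    "\<And>x. (\<forall>y. g y \<le> b) \<Longrightarrow> 2 \<le> b \<Longrightarrow> P x \<le> b"
    "finite {x. P x \<noteq> 0}"
    "Max F \<le> k \<Longrightarrow> sumset {x. P x \<noteq> 0} {..k - (amax g - amin g + Min F)} = {..k}"
proof -
  note K = key[of g h f, folded F_def, OF fin FS ne]
  define a where "a = amin g"
  define s where "s = amax g"
  define m where "m = Min F"
  define j where "j = Max F - Min F"
  have P: "P x = (if x \<le> s - a then
      (if g (x + a) \<noteq> 0 then g (x + a)
       else if (\<exists>y\<le>x. x - y \<le> j - (s - a) \<and> g (y + a) \<noteq> 0) then 0 else 1)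
    else if x \<le> s - a + m then (if x = s then 2 else 1) else 0)" for x
    unfolding P_def Phi_def a_def s_def m_def j_def by simp
  have am: "a \<le> m" "s - a + m \<le> Max F" "a \<le> s" "g s \<noteq> 0"
    using K unfolding a_def s_def m_def by auto
  show "P (amax g - amin g + Min F) \<noteq> 0"
    using am by (cases "m = 0") (auto simp: P a_def[symmetric] s_def[symmetric] m_def[symmetric])
  show "\<And>x. amax g - amin g + Min F < x \<Longrightarrow> P x = 0"
    by (auto simp: P a_def[symmetric] s_def[symmetric] m_def[symmetric])
  show "1 \<le> amin g \<Longrightarrow> P (amax g) = 2"
    using am by (auto simp: P a_def[symmetric] s_def[symmetric] m_def[symmetric])
  show "\<And>x. amax g - amin g < x \<Longrightarrow> x \<le> amax g - amin g + Min F \<Longrightarrow> x \<noteq> amax g \<Longrightarrow> P x = 1"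
    by (auto simp: P a_def[symmetric] s_def[symmetric] m_def[symmetric])
  show 6: "\<And>x. x \<le> amax g - amin g \<Longrightarrow> g (x + amin g) \<noteq> 0 \<Longrightarrow> P x = g (x + amin g)"
    by (auto simp: P a_def[symmetric] s_def[symmetric] m_def[symmetric])
  show "\<And>x. x \<le> amax g - amin g \<Longrightarrow> (g (x + amin g) \<noteq> 0 \<longleftrightarrow> P x \<noteq> 0 \<and> x + Min F \<in> F)"
  proof -
    fix x assume x: "x \<le> amax g - amin g"
    show "(g (x + amin g) \<noteq> 0 \<longleftrightarrow> P x \<noteq> 0 \<and> x + Min F \<in> F)"
    proof
      assume "g (x + amin g) \<noteq> 0" then show "P x \<noteq> 0 \<and> x + Min F \<in> F"
        using 6[OF x] K(7)[OF x] by simp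
    next
      assume H: "P x \<noteq> 0 \<and> x + Min F \<in> F"
      show "g (x + amin g) \<noteq> 0"
      proof
        assume g0: "g (x + amin g) = 0"
        from K(8)[OF x] H obtain y where "y \<le> x" "x - y \<le> (Max F - Min F) - (amax g - amin g)" "g (y + amin g) \<noteq> 0"
          by blast
        moreover have "j - (s - a) = (Max F - Min F) - (amax g - amin g)" unfolding j_def a_def s_def by simp
        ultimately have "P x = 0" using x g0 unfolding P a_def[symmetric] s_def[symmetric] m_def[symmetric]
          by auto
        with H show False by simp
      qed
    qed
  qed
  show "\<And>x. (\<forall>y. g y \<le> b) \<Longrightarrow> 2 \<le> b \<Longrightarrow> P x \<le> b"
    by (auto simp: P)
  have sub: "{x. P x \<noteq> 0} \<subseteq> {..s - a + m}"
    by (auto simp: P split: if_splits)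
  then show "finite {x. P x \<noteq> 0}" using finite_subset by blast
  show "Max F \<le> k \<Longrightarrow> sumset {x. P x \<noteq> 0} {..k - (amax g - amin g + Min F)} = {..k}"
  proof -
    assume Mk: "Max F \<le> k"
    have top: "P (s - a + m) \<noteq> 0"
      using am by (cases "m = 0") (auto simp: P)
    show ?thesis
    proof (intro equalityI subsetI)
      fix z assume "z \<in> sumset {x. P x \<noteq> 0} {..k - (amax g - amin g + Min F)}"
      then obtain p q where "P p \<noteq> 0" "q \<le> k - (s - a + m)" "z = p + q"
        unfolding sumset_def a_def s_def m_def by auto
      moreover have "p \<le> s - a + m" using sub \<open>P p \<noteq> 0\<close> by auto
      ultimately show "z \<in> {..k}" using am Mk by auto
    next
      fix z assume z: "z \<in> {..k}"
      have "\<exists>p q. P p \<noteq> 0 \<and> q \<le> k - (s - a + m) \<and> z = p + q"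
      proof (cases "s - a + m \<le> z")
        case True then show ?thesis using top z am Mk by (intro exI[of _ "s - a + m"] exI[of _ "z - (s - a + m)"]) auto
      next
        case False
        show ?thesis
        proof (cases "s - a < z")
          case True
          then have "P z \<noteq> 0" using False by (auto simp: P)
          then show ?thesis by auto
        next
          case zs: False
          show ?thesis
          proof (cases "g (z + a) \<noteq> 0")
            case True
            then have "P z \<noteq> 0" using zs by (auto simp: P)
            then show ?thesis by auto
          next
            case g0: False
            show ?thesis
            proof (cases "\<exists>y\<le>z. z - y \<le> j - (s - a) \<and> g (y + a) \<noteq> 0")
              case True
              then obtain y where y: "y \<le> z" "z - y \<le> j - (s - a)" "g (y + a) \<noteq> 0" by blast
              then have "P y \<noteq> 0" using zs by (auto simp: P)
              moreover have "z - y \<le> k - (s - a + m)" using y(2) Mk am unfolding j_def m_def by linarith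
              ultimately show ?thesis using y(1) by (intro exI[of _ y] exI[of _ "z - y"]) auto
            next
              case False
              then have "P z \<noteq> 0" using zs g0 by (auto simp: P)
              then show ?thesis by auto
            qed
          qed
        qed
      qed
      then show "z \<in> sumset {x. P x \<noteq> 0} {..k - (amax g - amin g + Min F)}"
        unfolding sumset_def a_def s_def m_def by auto
    qed
  qed
qed

lemma sa1: "set_array q 1 = {x. q x \<noteq> 0}"
  by (auto simp: set_array_def)

lemma sa_int1: "set_array (interval_ms n) 1 = {..n}"
  by (auto simp: set_array_def interval_ms_def)

lemma sa_int2: "2 \<le> i \<Longrightarrow> set_array (interval_ms n) i = {}"
  by (auto simp: set_array_def interval_ms_def)

lemma sumset_empty2[simp]: "sumset X {} = {}"
  by (simp add: sumset_def)

lemma interval_Mb: "1 \<le> b \<Longrightarrow> interval_ms n \<in> Mb b"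
  by (auto simp: Mb_def interval_ms_def)

lemma div_interval:
  assumes "1 \<le> b" "w \<in> Mb b" "sumset {x. w x \<noteq> 0} {..n} = {..k}"
  shows "ms_divisor b w (interval_ms k)"
  unfolding ms_divisor_def
proof (intro conjI bexI ballI)
  show "w \<in> Mb b" by fact
  show "interval_ms n \<in> Mb b" using assms interval_Mb by auto
  fix i assume "i \<in> {1..b}"
  then consider "i = 1" | "2 \<le> i" by fastforce
  then show "set_array (interval_ms k) i = sumset (set_array w i) (set_array (interval_ms n) i)"
  proof cases
    case 1
    show ?thesis unfolding 1 sa_int1 using assms(3) sa1[of w] by simp
  qed (simp add: sa_int2)
qed

lemma divisor_unpack:
  assumes "ms_divisor b g f" "1 \<le> b"
  shows "g \<in> Mb b" "\<exists>h. h \<in> Mb b \<and> finite {x. g x \<noteq> 0} \<and> finite {x. h x \<noteq> 0} \<and>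
     {x. f x \<noteq> 0} = sumset {x. g x \<noteq> 0} {x. h x \<noteq> 0} \<and>
     (\<forall>i\<in>{1..b}. set_array f i = sumset (set_array g i) (set_array h i))"
proof -
  show gM: "g \<in> Mb b" using assms unfolding ms_divisor_def by auto
  obtain h where h: "h \<in> Mb b" "\<forall>i\<in>{1..b}. set_array f i = sumset (set_array g i) (set_array h i)"
    using assms unfolding ms_divisor_def by auto
  then have "set_array f 1 = sumset (set_array g 1) (set_array h 1)" using assms by auto
  then have "{x. f x \<noteq> 0} = sumset {x. g x \<noteq> 0} {x. h x \<noteq> 0}" by (simp only: sa1)
  then show "\<exists>h. h \<in> Mb b \<and> finite {x. g x \<noteq> 0} \<and> finite {x. h x \<noteq> 0} \<and>
     {x. f x \<noteq> 0} = sumset {x. g x \<noteq> 0} {x. h x \<noteq> 0} \<and>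
     (\<forall>i\<in>{1..b}. set_array f i = sumset (set_array g i) (set_array h i))"
    using h gM by (intro exI[of _ h]) (auto simp: sa1 Mb_def)
qed

lemma divisor_interval_supp:
  assumes d: "ms_divisor b g (interval_ms k)" and b: "1 \<le> b" and gx: "g x \<noteq> 0"
  shows "x \<le> k"
proof -
  obtain h :: "nat \<Rightarrow> nat" where h2: "{x. interval_ms k x \<noteq> 0} = sumset {x. g x \<noteq> 0} {x. h x \<noteq> 0}"
    using divisor_unpack(2)[OF d b] by blast
  have "{x. interval_ms k x \<noteq> 0} \<noteq> {}" by (auto simp: interval_ms_def)
  then obtain t where "h t \<noteq> 0" using h2 sumset_empty_iff by blast
  then have "x + t \<in> {x. interval_ms k x \<noteq> 0}" using h2 gx unfolding sumset_def by blast
  then show ?thesis by (auto simp: interval_ms_def split: if_splits)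
qed

lemma finite_divisors_interval:
  assumes "1 \<le> b"
  shows "finite {g. ms_divisor b g (interval_ms k)}"
proof (rule finite_subset)
  show "finite {g. \<forall>x. (x \<in> {..k} \<longrightarrow> g x \<in> {..b}) \<and> (x \<notin> {..k} \<longrightarrow> g x = (0::nat))}"
    by (rule finite_set_of_finite_funs) auto
  show "{g. ms_divisor b g (interval_ms k)} \<subseteq> {g. \<forall>x. (x \<in> {..k} \<longrightarrow> g x \<in> {..b}) \<and> (x \<notin> {..k} \<longrightarrow> g x = 0)}"
    using divisor_interval_supp[OF _ assms] divisor_unpack(1)[OF _ assms]
    by (auto simp: Mb_def)
qed

lemma supp_interval: "{x. interval_ms n x \<noteq> 0} = {..n}"
  by (auto simp: interval_ms_def)

lemma sumset_atMost: "sumset {..p} {..q} = {..p + q}"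
proof (intro equalityI subsetI)
  fix z assume z: "z \<in> {..p + q}"
  show "z \<in> sumset {..p} {..q}"
  proof (cases "z \<le> p")
    case True
    then have "z \<in> {..p}" "(0::nat) \<in> {..q}" "z = z + 0" by auto
    then show ?thesis unfolding sumset_def by blast
  next
    case False
    then have "p \<in> {..p}" "z - p \<in> {..q}" "z = p + (z - p)" using z by auto
    then show ?thesis unfolding sumset_def by blast
  qed
qed (auto simp: sumset_def)

lemma part1:
  fixes f :: "nat \<Rightarrow> nat"
  assumes b: "2 \<le> b" and fM: "f \<in> Mb b" and fk: "\<forall>j. f j \<noteq> 0 \<longrightarrow> j \<le> k" and fne: "f \<noteq> (\<lambda>_. 0)"
  shows "ms_d b f \<le> ms_d b (interval_ms k) \<and> (f \<noteq> interval_ms k \<longrightarrow> ms_d b f < ms_d b (interval_ms k))"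
proof -
  define F where "F = {x. f x \<noteq> 0}"
  have Fne: "F \<noteq> {}" using fne unfolding F_def by auto
  have Fk: "F \<subseteq> {..k}" using fk unfolding F_def by auto
  have Ffin: "finite F" using Fk finite_subset by blast
  have MFk: "Max F \<le> k" using Fk Ffin Fne by auto
  define \<Phi> where "\<Phi> = Phi (Min F) (Max F - Min F)"
  define Df where "Df = {g. ms_divisor b g f}"
  define Dk where "Dk = {g. ms_divisor b g (interval_ms k)}"
  have b1: "1 \<le> b" using b by simp
  have finDk: "finite Dk" unfolding Dk_def using finite_divisors_interval[OF b1] .
  have unp: "\<And>g thesis. g \<in> Df \<Longrightarrow> (\<And>h::nat\<Rightarrow>nat. finite {x. g x \<noteq> 0} \<Longrightarrow> finite {x. h x \<noteq> 0} \<Longrightarrow>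
     F = sumset {x. g x \<noteq> 0} {x. h x \<noteq> 0} \<Longrightarrow> (\<forall>y. g y \<le> b) \<Longrightarrow>
     (\<forall>i\<in>{1..b}. set_array f i = sumset (set_array g i) (set_array h i)) \<Longrightarrow> thesis) \<Longrightarrow> thesis"
  proof -
    fix g thesis assume that0: "g \<in> Df" and
      th: "\<And>h::nat\<Rightarrow>nat. finite {x. g x \<noteq> 0} \<Longrightarrow> finite {x. h x \<noteq> 0} \<Longrightarrow>
     F = sumset {x. g x \<noteq> 0} {x. h x \<noteq> 0} \<Longrightarrow> (\<forall>y. g y \<le> b) \<Longrightarrow>
     (\<forall>i\<in>{1..b}. set_array f i = sumset (set_array g i) (set_array h i)) \<Longrightarrow> thesis"
    have d: "ms_divisor b g f" using that0 unfolding Df_def by simp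
    have gb: "\<forall>y. g y \<le> b" using divisor_unpack(1)[OF d b1] unfolding Mb_def by simp
    obtain h :: "nat \<Rightarrow> nat" where "h \<in> Mb b" "finite {x. g x \<noteq> 0}" "finite {x. h x \<noteq> 0}"
      "{x. f x \<noteq> 0} = sumset {x. g x \<noteq> 0} {x. h x \<noteq> 0}"
      "\<forall>i\<in>{1..b}. set_array f i = sumset (set_array g i) (set_array h i)"
      using divisor_unpack(2)[OF d b1] by (elim exE conjE) simp
    then show thesis using th[of h] gb unfolding F_def by simp
  qed
  have img: "\<Phi> g \<in> Dk" if g: "g \<in> Df" for g
  proof -
    obtain h :: "nat \<Rightarrow> nat" where h: "finite {x. g x \<noteq> 0}" "finite {x. h x \<noteq> 0}" "F = sumset {x. g x \<noteq> 0} {x. h x \<noteq> 0}"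
      "\<forall>y. g y \<le> b" "\<forall>i\<in>{1..b}. set_array f i = sumset (set_array g i) (set_array h i)" by (rule unp[OF g])
    note P = Phi_props[of g h f, folded F_def, folded \<Phi>_def, OF h(1,2,3) Fne]
    have "\<Phi> g \<in> Mb b" unfolding Mb_def using P(7)[OF h(4) b] P(8) by auto
    then show ?thesis unfolding Dk_def using div_interval[OF b1 _ P(9)[OF MFk]] by blast
  qed
  have inj: "inj_on \<Phi> Df"
  proof (rule inj_onI)
    fix g1 g2 assume g1: "g1 \<in> Df" and g2: "g2 \<in> Df" and eq: "\<Phi> g1 = \<Phi> g2"
    obtain h1 :: "nat \<Rightarrow> nat" where h1: "finite {x. g1 x \<noteq> 0}" "finite {x. h1 x \<noteq> 0}" "F = sumset {x. g1 x \<noteq> 0} {x. h1 x \<noteq> 0}"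
      "\<forall>y. g1 y \<le> b" "\<forall>i\<in>{1..b}. set_array f i = sumset (set_array g1 i) (set_array h1 i)" by (rule unp[OF g1])
    obtain h2 :: "nat \<Rightarrow> nat" where h2: "finite {x. g2 x \<noteq> 0}" "finite {x. h2 x \<noteq> 0}" "F = sumset {x. g2 x \<noteq> 0} {x. h2 x \<noteq> 0}"
      "\<forall>y. g2 y \<le> b" "\<forall>i\<in>{1..b}. set_array f i = sumset (set_array g2 i) (set_array h2 i)" by (rule unp[OF g2])
    note P1 = Phi_props[of g1 h1 f, folded F_def, folded \<Phi>_def, OF h1(1,2,3) Fne]
    note P2 = Phi_props[of g2 h2 f, folded F_def, folded \<Phi>_def, OF h2(1,2,3) Fne]
    note K1 = key[of g1 h1 f, folded F_def, OF h1(1,2,3) Fne]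
    note K2 = key[of g2 h2 f, folded F_def, OF h2(1,2,3) Fne]
    have s: "amax g1 - amin g1 = amax g2 - amin g2"
    proof (rule ccontr)
      assume "amax g1 - amin g1 \<noteq> amax g2 - amin g2"
      then consider "amax g1 - amin g1 < amax g2 - amin g2" | "amax g2 - amin g2 < amax g1 - amin g1" by linarith
      then show False
      proof cases
        case 1
        then have "\<Phi> g1 (amax g2 - amin g2 + Min F) = 0" using P1(2) by simp
        then show False using P2(1) eq by simp
      next
        case 2
        then have "\<Phi> g2 (amax g1 - amin g1 + Min F) = 0" using P2(2) by simp
        then show False using P1(1) eq by simp
      qed
    qed
    have am: "amax g1 = amax g2"
    proof (rule ccontr)
      assume ne: "amax g1 \<noteq> amax g2"
      then have "amin g1 \<noteq> amin g2" using s K1(4) K2(4) by linarith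
      then consider "1 \<le> amin g1" | "1 \<le> amin g2" by linarith
      then show False
      proof cases
        case 1
        have "amax g2 - amin g2 < amax g1" "amax g1 \<le> amax g2 - amin g2 + Min F"
          using s K1(2,4) 1 by linarith+
        then have "\<Phi> g2 (amax g1) = 1" using P2(4)[of "amax g1"] ne by blast
        then show False using P1(3)[OF 1] eq by simp
      next
        case 2
        have "amax g1 - amin g1 < amax g2" "amax g2 \<le> amax g1 - amin g1 + Min F"
          using s K2(2,4) 2 by linarith+
        then have "\<Phi> g1 (amax g2) = 1" using P1(4)[of "amax g2"] ne by metis
        then show False using P2(3)[OF 2] eq by simp
      qed
    qed
    then have a: "amin g1 = amin g2" using s K1(4) K2(4) by linarith
    show "g1 = g2"
    proof
      fix x
      show "g1 x = g2 x"
      proof (cases "amin g1 \<le> x \<and> x \<le> amax g1")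
        case True
        define y where "y = x - amin g1"
        have x1: "x = y + amin g1" "y \<le> amax g1 - amin g1" using True unfolding y_def by auto
        have x2: "x = y + amin g2" "y \<le> amax g2 - amin g2" using x1 a am by auto
        have i1: "g1 x \<noteq> 0 \<longleftrightarrow> \<Phi> g1 y \<noteq> 0 \<and> y + Min F \<in> F" using P1(5)[OF x1(2)] x1(1) by simp
        have i2: "g2 x \<noteq> 0 \<longleftrightarrow> \<Phi> g2 y \<noteq> 0 \<and> y + Min F \<in> F" using P2(5)[OF x2(2)] x2(1) by simp
        have iff: "g1 x \<noteq> 0 \<longleftrightarrow> g2 x \<noteq> 0" using i1 i2 eq by simp
        show ?thesis
        proof (cases "g1 x = 0")
          case True then show ?thesis using iff by simp
        next
          case False
          then have "\<Phi> g1 y = g1 x" "\<Phi> g2 y = g2 x" using P1(6)[OF x1(2)] P2(6)[OF x2(2)] x1(1) x2(1) iff by auto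
          then show ?thesis using eq by simp
        qed
      next
        case False
        then have "g1 x = 0" using K1(6) by blast
        moreover have "\<not> (amin g2 \<le> x \<and> x \<le> amax g2)" using False a am by simp
        then have "g2 x = 0" using K2(6) by blast
        ultimately show ?thesis by simp
      qed
    qed
  qed
  have le: "card Df \<le> card Dk" using card_inj_on_le[OF inj _ finDk] img by blast
  have strict: "\<exists>w \<in> Dk. w \<notin> \<Phi> ` Df" if fi: "f \<noteq> interval_ms k"
  proof (cases "F = {..k}")
    case True
    have "\<exists>y. 2 \<le> f y"
    proof (rule ccontr)
      assume A: "\<not> (\<exists>y. 2 \<le> f y)"
      have "f y = interval_ms k y" for y
      proof (cases "y \<le> k")
        case True
        then have "f y \<noteq> 0" using \<open>F = {..k}\<close> unfolding F_def by auto
        moreover have "\<not> 2 \<le> f y" using A by blast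
        ultimately have "f y = 1" by linarith
        then show ?thesis using True unfolding interval_ms_def by simp
      next
        case False
        then have "f y = 0" using \<open>F = {..k}\<close> unfolding F_def by auto
        then show ?thesis using False unfolding interval_ms_def by simp
      qed
      then show False using fi by auto
    qed
    then obtain y0 where y0: "2 \<le> f y0" by blast
    have wD: "interval_ms k \<in> Dk" unfolding Dk_def
      using div_interval[of b "interval_ms k" 0 k] interval_Mb[OF b1, of k] sumset_atMost[of k 0] supp_interval[of k] b1 by simp
    have "interval_ms k \<notin> \<Phi> ` Df"
    proof
      assume "interval_ms k \<in> \<Phi> ` Df"
      then obtain g where g: "g \<in> Df" "\<Phi> g = interval_ms k" by (metis imageE)
      obtain h :: "nat \<Rightarrow> nat" where h: "finite {x. g x \<noteq> 0}" "finite {x. h x \<noteq> 0}" "F = sumset {x. g x \<noteq> 0} {x. h x \<noteq> 0}"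
        "\<forall>y. g y \<le> b" "\<forall>i\<in>{1..b}. set_array f i = sumset (set_array g i) (set_array h i)" by (rule unp[OF g(1)])
      note P = Phi_props[of g h f, folded F_def, folded \<Phi>_def, OF h(1,2,3) Fne]
      note K = key[of g h f, folded F_def, OF h(1,2,3) Fne]
      have "Min F = 0" using True by (simp add: Min_eqI)
      then have a0: "amin g = 0" using K(2) by simp
      have "2 \<in> {1..b}" using b by simp
      then have "set_array f 2 = sumset (set_array g 2) (set_array h 2)" by (rule bspec[OF h(5)])
      moreover have "set_array f 2 \<noteq> {}" using y0 unfolding set_array_def by auto
      ultimately have "set_array g 2 \<noteq> {}" using sumset_empty_iff by metis
      then obtain y where y: "2 \<le> g y" unfolding set_array_def by blast
      then have "y \<le> amax g - amin g" using K(6)[of y] a0 by simp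
      then have "\<Phi> g y = g y" using P(6)[of y] a0 y by simp
      then have "interval_ms k y \<ge> 2" using g(2) y by simp
      then show False by (simp add: interval_ms_def split: if_splits)
    qed
    then show ?thesis using wD by blast
  next
    case False
    show ?thesis
    proof (cases "Min F = 0")
      case False
      have wD: "interval_ms 0 \<in> Dk" unfolding Dk_def
        using div_interval[of b "interval_ms 0" k k] interval_Mb[OF b1, of 0] sumset_atMost[of 0 k] supp_interval[of 0] b1 by simp
      have "interval_ms 0 \<notin> \<Phi> ` Df"
      proof
        assume "interval_ms 0 \<in> \<Phi> ` Df"
        then obtain g where g: "g \<in> Df" "\<Phi> g = interval_ms 0" by (metis imageE)
        obtain h :: "nat \<Rightarrow> nat" where h: "finite {x. g x \<noteq> 0}" "finite {x. h x \<noteq> 0}" "F = sumset {x. g x \<noteq> 0} {x. h x \<noteq> 0}"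
          "\<forall>y. g y \<le> b" "\<forall>i\<in>{1..b}. set_array f i = sumset (set_array g i) (set_array h i)" by (rule unp[OF g(1)])
        note P = Phi_props[of g h f, folded F_def, folded \<Phi>_def, OF h(1,2,3) Fne]
        have "interval_ms 0 (amax g - amin g + Min F) \<noteq> 0" using P(1) g(2) by simp
        then show False using False by (simp add: interval_ms_def split: if_splits)
      qed
      then show ?thesis using wD by blast
    next
      case m0: True
      define w where "w = (\<lambda>x::nat. if x \<le> k then 2 else (0::nat))"
      have wM: "w \<in> Mb b" using b unfolding Mb_def w_def by auto
      have "{x. w x \<noteq> 0} = {..k}" unfolding w_def by auto
      then have wD: "w \<in> Dk" unfolding Dk_def
        using div_interval[OF b1 wM, of 0 k] sumset_atMost[of k 0] by simp
      have "w \<notin> \<Phi> ` Df"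
      proof
        assume "w \<in> \<Phi> ` Df"
        then obtain g where g: "g \<in> Df" "\<Phi> g = w" by (metis imageE)
        obtain h :: "nat \<Rightarrow> nat" where h: "finite {x. g x \<noteq> 0}" "finite {x. h x \<noteq> 0}" "F = sumset {x. g x \<noteq> 0} {x. h x \<noteq> 0}"
          "\<forall>y. g y \<le> b" "\<forall>i\<in>{1..b}. set_array f i = sumset (set_array g i) (set_array h i)" by (rule unp[OF g(1)])
        note P = Phi_props[of g h f, folded F_def, folded \<Phi>_def, OF h(1,2,3) Fne]
        note K = key[of g h f, folded F_def, OF h(1,2,3) Fne]
        have a0: "amin g = 0" using K(2) m0 by simp
        have ks: "k \<le> amax g - amin g"
        proof (rule ccontr)
          assume "\<not> k \<le> amax g - amin g"
          then have "\<Phi> g k = 0" using P(2)[of k] m0 by simp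
          then show False using g(2) unfolding w_def by simp
        qed
        obtain x where x: "x \<le> k" "x \<notin> F" using False Fk by blast
        have xs: "x \<le> amax g - amin g" using x ks by simp
        have gx: "g x = 0" using P(5)[OF xs] x a0 m0 by simp
        have "\<Phi> g x \<le> 1" using gx xs a0 unfolding \<Phi>_def Phi_def by simp
        then show False using g(2) x unfolding w_def by simp
      qed
      then show ?thesis using wD by blast
    qed
  qed
  have "ms_d b f \<le> ms_d b (interval_ms k)" using le unfolding ms_d_def Df_def Dk_def by simp
  moreover have "ms_d b f < ms_d b (interval_ms k)" if fi: "f \<noteq> interval_ms k"
  proof -
    have "\<Phi> ` Df \<subset> Dk" using strict[OF fi] img by blast
    then have "card (\<Phi> ` Df) < card Dk" using finDk psubset_card_mono by blast
    moreover have "card (\<Phi> ` Df) = card Df" using card_image[OF inj] .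
    ultimately show ?thesis unfolding ms_d_def Df_def Dk_def by simp
  qed
  ultimately show ?thesis by blast
qed




lemma digit_Suc: "digit b x (Suc i) = digit b (x div b) i"
  unfolding digit_def by (simp add: div_mult2_eq)

lemma digit_0: "digit b x 0 = x mod b"
  unfolding digit_def by simp

lemma digit_lt: "0 < b \<Longrightarrow> digit b x i < b"
  unfolding digit_def by simp

lemma digit_nz: assumes "2 \<le> b" "digit b x i \<noteq> 0" shows "i < x"
proof -
  have "b ^ i \<le> x"
  proof (rule ccontr)
    assume "\<not> b ^ i \<le> x"
    then have "x div b ^ i = 0" by simp
    then show False using assms(2) unfolding digit_def by simp
  qed
  moreover have "i < 2 ^ i" by (rule less_exp)
  moreover have "(2::nat) ^ i \<le> b ^ i" using assms(1) by (simp add: power_mono)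
  ultimately show ?thesis by linarith
qed

lemma sum_shift_b: "(\<Sum>i<Suc N. c i * (b::nat) ^ i) = c 0 + b * (\<Sum>i<N. c (Suc i) * b ^ i)"
proof -
  have "(\<Sum>i<Suc N. c i * b ^ i) = c 0 * b ^ 0 + (\<Sum>i<N. c (Suc i) * b ^ (Suc i))"
    by (rule sum.lessThan_Suc_shift)
  moreover have "(\<Sum>i<N. c (Suc i) * b ^ (Suc i)) = (\<Sum>i<N. b * (c (Suc i) * b ^ i))"
    by (rule sum.cong) auto
  moreover have "(\<Sum>i<N. b * (c (Suc i) * b ^ i)) = b * (\<Sum>i<N. c (Suc i) * b ^ i)"
    by (rule sum_distrib_left[symmetric])
  ultimately show ?thesis by simp
qed

lemma digit_sum:
  assumes "\<forall>i. c i < (b::nat)"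
  shows "digit b (\<Sum>i<N. c i * b ^ i) j = (if j < N then c j else 0)"
  using assms
proof (induction j arbitrary: c N)
  case 0
  show ?case
  proof (cases N)
    case 0 then show ?thesis by (simp add: digit_def)
  next
    case (Suc N')
    have "c 0 < b" using "0.prems" by simp
    then show ?thesis unfolding Suc sum_shift_b digit_0 by simp
  qed
next
  case (Suc j)
  show ?case
  proof (cases N)
    case 0 then show ?thesis by (simp add: digit_def)
  next
    case (Suc N')
    have cb: "c 0 < b" using Suc.prems by simp
    have "(c 0 + b * (\<Sum>i<N'. c (Suc i) * b ^ i)) div b = (\<Sum>i<N'. c (Suc i) * b ^ i)"
      using cb by simp
    moreover have "\<forall>i. (\<lambda>i. c (Suc i)) i < b" using Suc.prems by simp
    ultimately show ?thesis unfolding Suc sum_shift_b digit_Suc using Suc.IH[of "\<lambda>i. c (Suc i)" N'] by simp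
  qed
qed

lemma num_digits:
  assumes "0 < b" "x < b ^ N"
  shows "x = (\<Sum>i<N. digit b x i * b ^ i)"
  using assms(2)
proof (induction N arbitrary: x)
  case 0 then show ?case by simp
next
  case (Suc N)
  have "x div b < b ^ N" using Suc.prems assms(1) by (simp add: div_less_iff_less_mult mult.commute)
  then have IH: "x div b = (\<Sum>i<N. digit b (x div b) i * b ^ i)" by (rule Suc.IH)
  have "(\<Sum>i<Suc N. digit b x i * b ^ i) = x mod b + b * (\<Sum>i<N. digit b (x div b) i * b ^ i)"
    unfolding sum_shift_b digit_0 digit_Suc by simp
  also have "\<dots> = x mod b + b * (x div b)" using IH by simp
  also have "\<dots> = x" by simp
  finally show ?case by simp
qed

lemma big_pow: "2 \<le> b \<Longrightarrow> x < b ^ x"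
proof -
  assume "2 \<le> b"
  have "x < 2 ^ x" by (rule less_exp)
  also have "(2::nat) ^ x \<le> b ^ x" using \<open>2 \<le> b\<close> by (simp add: power_mono)
  finally show ?thesis .
qed

lemma digits_inj:
  assumes "2 \<le> b" "\<forall>i. digit b x i = digit b y i"
  shows "x = y"
proof -
  have "x < b ^ (x + y)" using big_pow[OF assms(1), of x] assms(1)
    by (meson le_add1 less_le_trans one_less_numeral_iff power_increasing_iff semiring_norm(76) order.trans[of 1 2 b] le_less_trans)
  moreover have "y < b ^ (x + y)" using big_pow[OF assms(1), of y] assms(1)
    by (metis add.commute le_add1 less_le_trans one_le_numeral power_increasing order.trans)
  ultimately show ?thesis using num_digits[of b x "x+y"] num_digits[of b y "x+y"] assms by simp
qed

lemma lunar_as_sum: "lunar_mult b x y = (\<Sum>n<Suc (x + y). Max ((\<lambda>i. min (digit b x i) (digit b y (n - i))) ` {..n}) * b ^ n)"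
  unfolding lunar_mult_def lessThan_Suc_atMost ..

lemma Max_lt:
  assumes "0 < b"
  shows "Max ((\<lambda>i. min (digit b x i) (digit b y (n - i))) ` {..n}) < b"
proof -
  have "Max ((\<lambda>i. min (digit b x i) (digit b y (n - i))) ` {..n}) \<in> (\<lambda>i. min (digit b x i) (digit b y (n - i))) ` {..n}"
    by (rule Max_in) auto
  then show ?thesis using digit_lt[OF assms] by (auto simp: min_def)
qed

lemma lunar_digit:
  assumes "2 \<le> b"
  shows "digit b (lunar_mult b x y) t = (if t \<le> x + y then Max ((\<lambda>i. min (digit b x i) (digit b y (t - i))) ` {..t}) else 0)"
proof -
  have "\<forall>n. (\<lambda>n. Max ((\<lambda>i. min (digit b x i) (digit b y (n - i))) ` {..n})) n < b"
    using Max_lt assms by simp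
  from digit_sum[OF this, of "Suc (x + y)" t] show ?thesis
    unfolding lunar_as_sum by (simp add: less_Suc_eq_le)
qed

lemma lunar_level:
  assumes b: "2 \<le> b" and c: "1 \<le> c"
  shows "c \<le> digit b (lunar_mult b x y) t \<longleftrightarrow> (\<exists>i\<le>t. c \<le> digit b x i \<and> c \<le> digit b y (t - i))"
proof (cases "t \<le> x + y")
  case True
  have "c \<le> Max ((\<lambda>i. min (digit b x i) (digit b y (t - i))) ` {..t}) \<longleftrightarrow>
      (\<exists>a\<in>(\<lambda>i. min (digit b x i) (digit b y (t - i))) ` {..t}. c \<le> a)"
    by (rule Max_ge_iff) auto
  moreover have "c \<le> digit b (lunar_mult b x y) t \<longleftrightarrow> c \<le> Max ((\<lambda>i. min (digit b x i) (digit b y (t - i))) ` {..t})"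
    using True by (simp only: lunar_digit[OF b] if_True)
  ultimately show ?thesis by auto
next
  case False
  have "\<not> (c \<le> digit b x i \<and> c \<le> digit b y (t - i))" if "i \<le> t" for i
  proof
    assume H: "c \<le> digit b x i \<and> c \<le> digit b y (t - i)"
    then have "digit b x i \<noteq> 0" "digit b y (t - i) \<noteq> 0" using c by auto
    then have "i < x" "t - i < y" using digit_nz[OF b] by auto
    then show False using False that by linarith
  qed
  then show ?thesis using False c by (auto simp: lunar_digit[OF b])
qed

lemma lunar_set_array:
  assumes b: "2 \<le> b" and c: "1 \<le> c"
  shows "set_array (digit b (lunar_mult b x y)) c = sumset (set_array (digit b x) c) (set_array (digit b y) c)"
proof (intro equalityI subsetI)
  fix t assume "t \<in> set_array (digit b (lunar_mult b x y)) c"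
  then obtain i where "i \<le> t" "c \<le> digit b x i" "c \<le> digit b y (t - i)"
    using lunar_level[OF b c] unfolding set_array_def by auto
  then show "t \<in> sumset (set_array (digit b x) c) (set_array (digit b y) c)"
    unfolding sumset_def set_array_def by (intro CollectI exI[of _ i] exI[of _ "t - i"]) auto
next
  fix t assume "t \<in> sumset (set_array (digit b x) c) (set_array (digit b y) c)"
  then obtain s u where "t = s + u" "c \<le> digit b x s" "c \<le> digit b y u"
    unfolding sumset_def set_array_def by auto
  then have "\<exists>i\<le>t. c \<le> digit b x i \<and> c \<le> digit b y (t - i)" by (intro exI[of _ s]) auto
  then show "t \<in> set_array (digit b (lunar_mult b x y)) c"
    using lunar_level[OF b c] unfolding set_array_def by auto
qed

lemma dig_Mb:
  assumes "2 \<le> b"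
  shows "digit b x \<in> Mb (b - 1)"
proof -
  have "\<forall>j. digit b x j \<le> b - 1" using digit_lt[of b x] assms by (simp add: less_Suc_eq_le[symmetric])
  moreover have "{j. digit b x j \<noteq> 0} \<subseteq> {..<x}" using digit_nz[OF assms] by auto
  then have "finite {j. digit b x j \<noteq> 0}" using finite_subset by blast
  ultimately show ?thesis unfolding Mb_def by simp
qed

lemma num_of:
  assumes "g \<in> Mb (b - 1)" "2 \<le> b"
  shows "\<exists>m. digit b m = g"
proof -
  have fin: "finite {x. g x \<noteq> 0}" and gb: "\<forall>j. g j \<le> b - 1" using assms unfolding Mb_def by auto
  obtain N where N: "\<forall>x\<in>{x. g x \<noteq> 0}. x < N" using fin unfolding finite_nat_set_iff_bounded by (elim exE) (rule that)
  have "\<forall>i. g i < b" using gb assms by (metis One_nat_def Suc_pred le_imp_less_Suc less_le_trans numeral_2_eq_2 zero_less_Suc)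
  from digit_sum[OF this, of N] have "digit b (\<Sum>i<N. g i * b ^ i) j = g j" for j
    using N by (cases "j < N") auto
  then show ?thesis by blast
qed

lemma level_eq:
  fixes u v B :: nat
  assumes "u \<le> B" "v \<le> B" "\<forall>c\<in>{1..B}. c \<le> u \<longleftrightarrow> c \<le> v"
  shows "u = v"
proof (rule ccontr)
  assume "u \<noteq> v"
  then consider "u < v" | "v < u" by linarith
  then show False
  proof cases
    case 1 then have "v \<in> {1..B}" using assms by auto
    then show False using bspec[OF assms(3) \<open>v \<in> {1..B}\<close>] 1 by simp
  next
    case 2 then have "u \<in> {1..B}" using assms by auto
    then show False using bspec[OF assms(3) \<open>u \<in> {1..B}\<close>] 2 by simp
  qed
qed

lemma lunar_d_eq:
  assumes b: "2 \<le> b" and n: "0 < n"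
  shows "lunar_d b n = ms_d (b - 1) (digit b n)"
proof -
  define A where "A = {m. 0 < m \<and> (\<exists>q. lunar_mult b m q = n)}"
  define B where "B = {g. ms_divisor (b - 1) g (digit b n)}"
  have inj: "inj_on (digit b) A"
    by (rule inj_onI) (metis b digits_inj)
  have sub: "digit b ` A \<subseteq> B"
  proof
    fix g assume "g \<in> digit b ` A"
    then obtain m q where mq: "g = digit b m" "lunar_mult b m q = n" unfolding A_def by auto
    have "ms_divisor (b - 1) (digit b m) (digit b n)"
      unfolding ms_divisor_def
    proof (intro conjI bexI ballI)
      show "digit b m \<in> Mb (b - 1)" using dig_Mb[OF b] .
      show "digit b q \<in> Mb (b - 1)" using dig_Mb[OF b] .
      fix i assume "i \<in> {1..b - 1}"
      then have "1 \<le> i" by simp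
      show "set_array (digit b n) i = sumset (set_array (digit b m) i) (set_array (digit b q) i)"
        using lunar_set_array[OF b \<open>1 \<le> i\<close>, of m q] mq(2) by simp
    qed
    then show "g \<in> B" unfolding B_def mq(1) by simp
  qed
  have sup: "B \<subseteq> digit b ` A"
  proof
    fix g assume "g \<in> B"
    then have d: "ms_divisor (b - 1) g (digit b n)" unfolding B_def by simp
    then obtain h where gM: "g \<in> Mb (b - 1)" and hM: "h \<in> Mb (b - 1)"
      and eqs: "\<forall>i\<in>{1..b - 1}. set_array (digit b n) i = sumset (set_array g i) (set_array h i)"
      using d unfolding ms_divisor_def by (elim conjE bexE) (rule that)
    obtain m where m: "digit b m = g" using num_of[OF gM b] by blast
    obtain q where q: "digit b q = h" using num_of[OF hM b] by blast
    have "1 \<in> {1..b - 1}" using b by simp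
    then have e1: "set_array (digit b n) 1 = sumset (set_array g 1) (set_array h 1)" by (rule bspec[OF eqs])
    have mpos: "0 < m"
    proof (rule ccontr)
      assume "\<not> 0 < m"
      then have "m = 0" by simp
      then have "set_array g 1 = {}" using m unfolding set_array_def digit_def by auto
      then have "set_array (digit b n) 1 = {}" using e1 by (simp add: sumset_def)
      have "digit b n i = digit b 0 i" for i
      proof (rule ccontr)
        assume "digit b n i \<noteq> digit b 0 i"
        then have "i \<in> set_array (digit b n) 1" unfolding set_array_def by (simp add: digit_def)
        then show False using \<open>set_array (digit b n) 1 = {}\<close> by simp
      qed
      then have "\<forall>i. digit b n i = digit b 0 i" by blast
      then have "n = 0" using digits_inj[OF b] by blast
      then show False using n by simp
    qed
    have "\<forall>t. digit b (lunar_mult b m q) t = digit b n t"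
    proof
      fix t
      show "digit b (lunar_mult b m q) t = digit b n t"
      proof (rule level_eq[of _ "b - 1"])
        show "digit b (lunar_mult b m q) t \<le> b - 1" "digit b n t \<le> b - 1"
          using digit_lt[of b] b by (simp_all add: less_Suc_eq_le[symmetric])
        show "\<forall>c\<in>{1..b - 1}. c \<le> digit b (lunar_mult b m q) t \<longleftrightarrow> c \<le> digit b n t"
        proof
          fix c assume c: "c \<in> {1..b - 1}"
          then have c1: "1 \<le> c" by simp
          have "set_array (digit b (lunar_mult b m q)) c = set_array (digit b n) c"
            using lunar_set_array[OF b c1, of m q] bspec[OF eqs c] m q by simp
          then have "t \<in> set_array (digit b (lunar_mult b m q)) c \<longleftrightarrow> t \<in> set_array (digit b n) c"
            by simp
          then show "c \<le> digit b (lunar_mult b m q) t \<longleftrightarrow> c \<le> digit b n t"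
            unfolding set_array_def by simp
        qed
      qed
    qed
    then have "lunar_mult b m q = n" using digits_inj[OF b] by blast
    then have "m \<in> A" unfolding A_def using mpos by blast
    then show "g \<in> digit b ` A" using m by blast
  qed
  have "bij_betw (digit b) A B" unfolding bij_betw_def using inj sub sup by blast
  then have "card A = card B" by (rule bij_betw_same_card)
  then show ?thesis unfolding lunar_d_def ms_d_def A_def B_def .
qed

lemma repunit_sum:
  assumes "1 \<le> (b::nat)"
  shows "(b - 1) * (\<Sum>i<k. b ^ i) + 1 = b ^ k"
proof (induction k)
  case 0 then show ?case by simp
next
  case (Suc k)
  have "(b - 1) * (\<Sum>i<Suc k. b ^ i) + 1 = ((b - 1) * (\<Sum>i<k. b ^ i) + 1) + (b - 1) * b ^ k"
    by (simp add: algebra_simps)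
  also have "\<dots> = b ^ k + (b - 1) * b ^ k" using Suc.IH by simp
  also have "\<dots> = b * b ^ k" using assms by (simp add: algebra_simps)
  finally show ?case by simp
qed

lemma repunit_digits:
  assumes b: "2 \<le> b" and k: "1 \<le> k"
  shows "digit b ((b ^ k - 1) div (b - 1)) = interval_ms (k - 1)"
proof -
  have "b ^ k - 1 = (b - 1) * (\<Sum>i<k. b ^ i)" using repunit_sum[of b k] b by simp
  then have R: "(b ^ k - 1) div (b - 1) = (\<Sum>i<k. (\<lambda>_. 1) i * b ^ i)" using b by simp
  have "\<forall>i. (\<lambda>_. 1::nat) i < b" using b by simp
  show ?thesis
  proof (rule ext)
    fix j
    show "digit b ((b ^ k - 1) div (b - 1)) j = interval_ms (k - 1) j"
      unfolding R digit_sum[OF \<open>\<forall>i. (\<lambda>_. 1::nat) i < b\<close>, of k j] interval_ms_def using k by auto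
  qed
qed

lemma kdigit_supp:
  assumes b: "2 \<le> b" and n: "n < b ^ k" and d: "digit b n j \<noteq> 0"
  shows "j \<le> k - 1"
proof (rule ccontr)
  assume "\<not> j \<le> k - 1"
  then have "k \<le> j" by simp
  then have "b ^ k \<le> b ^ j" using b by (simp add: power_increasing)
  then have "n div b ^ j = 0" using n by simp
  then show False using d unfolding digit_def by simp
qed


theorem mainTheorem3:
  shows "(\<forall>b k f. b \<ge> 2 \<and> f \<in> Mb b \<and> (\<forall>j. f j \<noteq> 0 \<longrightarrow> j \<le> k) \<and> f \<noteq> (\<lambda>_. 0) \<longrightarrow>
            ms_d b f \<le> ms_d b (interval_ms k) \<and>
            (f \<noteq> interval_ms k \<longrightarrow> ms_d b f < ms_d b (interval_ms k)))
       \<and> (\<forall>b k n. b \<ge> 3 \<and> k \<ge> 1 \<and> b ^ (k - 1) \<le> n \<and> n < b ^ k \<longrightarrow>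
            lunar_d b n \<le> lunar_d b ((b ^ k - 1) div (b - 1)) \<and>
            (n \<noteq> (b ^ k - 1) div (b - 1) \<longrightarrow> lunar_d b n < lunar_d b ((b ^ k - 1) div (b - 1))))"
proof -
  have P1: "\<forall>b k f. b \<ge> 2 \<and> f \<in> Mb b \<and> (\<forall>j. f j \<noteq> 0 \<longrightarrow> j \<le> k) \<and> f \<noteq> (\<lambda>_. 0) \<longrightarrow>
            ms_d b f \<le> ms_d b (interval_ms k) \<and>
            (f \<noteq> interval_ms k \<longrightarrow> ms_d b f < ms_d b (interval_ms k))"
  proof (intro allI impI)
    fix b k and f :: "nat \<Rightarrow> nat"
    assume H: "b \<ge> 2 \<and> f \<in> Mb b \<and> (\<forall>j. f j \<noteq> 0 \<longrightarrow> j \<le> k) \<and> f \<noteq> (\<lambda>_. 0)"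
    show "ms_d b f \<le> ms_d b (interval_ms k) \<and> (f \<noteq> interval_ms k \<longrightarrow> ms_d b f < ms_d b (interval_ms k))"
      using part1[of b f k] H by blast
  qed
  have P2: "\<forall>b k n. b \<ge> 3 \<and> k \<ge> 1 \<and> b ^ (k - 1) \<le> n \<and> n < b ^ k \<longrightarrow>
            lunar_d b n \<le> lunar_d b ((b ^ k - 1) div (b - 1)) \<and>
            (n \<noteq> (b ^ k - 1) div (b - 1) \<longrightarrow> lunar_d b n < lunar_d b ((b ^ k - 1) div (b - 1)))"
  proof (intro allI impI)
    fix b k n :: nat
    assume H: "b \<ge> 3 \<and> k \<ge> 1 \<and> b ^ (k - 1) \<le> n \<and> n < b ^ k"
    have b2: "2 \<le> b" "2 \<le> b - 1" using H by auto
    have k1: "1 \<le> k" using H by simp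
    have "1 \<le> b ^ (k - 1)" using b2 by simp
    then have npos: "0 < n" using H by linarith
    define R where "R = (b ^ k - 1) div (b - 1)"
    have dR: "digit b R = interval_ms (k - 1)" unfolding R_def by (rule repunit_digits[OF b2(1) k1])
    have Rpos: "0 < R"
    proof (rule ccontr)
      assume "\<not> 0 < R"
      then have "R = 0" by simp
      then have "digit b R 0 = 0" by (simp add: digit_def)
      then show False using dR by (simp add: interval_ms_def)
    qed
    have fM: "digit b n \<in> Mb (b - 1)" by (rule dig_Mb[OF b2(1)])
    have fs: "\<forall>j. digit b n j \<noteq> 0 \<longrightarrow> j \<le> k - 1" using kdigit_supp[OF b2(1)] H by blast
    have fz: "digit b n \<noteq> (\<lambda>_. 0)"
    proof
      assume "digit b n = (\<lambda>_. 0)"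
      then have "\<forall>i. digit b n i = digit b 0 i" by (simp add: digit_def)
      then have "n = 0" using digits_inj[OF b2(1)] by blast
      then show False using npos by simp
    qed
    have M: "ms_d (b - 1) (digit b n) \<le> ms_d (b - 1) (interval_ms (k - 1)) \<and>
      (digit b n \<noteq> interval_ms (k - 1) \<longrightarrow> ms_d (b - 1) (digit b n) < ms_d (b - 1) (interval_ms (k - 1)))"
      by (rule part1[OF b2(2) fM fs fz])
    have Ln: "lunar_d b n = ms_d (b - 1) (digit b n)" by (rule lunar_d_eq[OF b2(1) npos])
    have LR: "lunar_d b R = ms_d (b - 1) (interval_ms (k - 1))" using lunar_d_eq[OF b2(1) Rpos] dR by simp
    have ne: "digit b n \<noteq> interval_ms (k - 1)" if "n \<noteq> R"
    proof
      assume "digit b n = interval_ms (k - 1)"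
      then have "\<forall>i. digit b n i = digit b R i" using dR by simp
      then have "n = R" using digits_inj[OF b2(1)] by blast
      then show False using that by simp
    qed
    show "lunar_d b n \<le> lunar_d b ((b ^ k - 1) div (b - 1)) \<and>
            (n \<noteq> (b ^ k - 1) div (b - 1) \<longrightarrow> lunar_d b n < lunar_d b ((b ^ k - 1) div (b - 1)))"
      using M Ln LR ne unfolding R_def[symmetric] by auto
  qed
  show ?thesis using P1 P2 by (rule conjI)
qed

end
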